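(* If $\lambda_1<a$ and $1<q<p$, then for any fixed $\Lambda>0$ there exists $t_0'=t_0'(\Lambda)>0$ such that $I^-_{\lambda,s}(-t\varphi_1)<0$ for all $t\ge t_0'$ and all $0<\lambda<\Lambda$.
   Context: $\Omega\subset\mathbb{R}^N$ bounded smooth domain, $s\in(0,1)$, $p>1$, $N>sp$. $X_p^s=\{u\in W^{s,p}(\mathbb{R}^N): u=0 \text{ a.e. in } \mathbb{R}^N\setminus\Omega\}$ with norm $\|u\|_{X_p^s}=\big(\int_{\mathbb{R}^{2N}}\frac{|u(x)-u(y)|^p}{|x-y|^{N+sp}}dxdy\big)^{1/p}$. $\lambda_1=\inf\{\|u\|_{X_p^s}^p:\|u\|_{L^p(\Omega)}=1\}$ is the first eigenvalue of the fractional $p$-Laplacian on $X_p^s$ and $\varphi_1$ its positive $L^p$-normalized eigenfunction. $u^-=\min\{u,0\}$ and $I^-_{\lambda,s}(u)=\frac1p\|u\|_{X_p^s}^p+\frac\lambda q\int_\Omega|u^-|^q-\frac ap\int_\Omega|u^-|^p$. *)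

theory Defs
  imports "HOL-Analysis.Analysis"
begin

text \<open>Ambient space: R^N rendered as an arbitrary Euclidean space 'a, N = DIM('a),
  with Lebesgue measure lborel.\<close>

fun Ck_on :: "nat \<Rightarrow> 'a::euclidean_space set \<Rightarrow> ('a \<Rightarrow> real) \<Rightarrow> bool" where
  "Ck_on 0 U f = continuous_on U f"
| "Ck_on (Suc k) U f = (f differentiable_on U \<and> continuous_on U f \<and>
      (\<forall>b\<in>Basis. Ck_on k U (\<lambda>x. frechet_derivative f (at x) b)))"

definition smooth_on :: "'a::euclidean_space set \<Rightarrow> ('a \<Rightarrow> real) \<Rightarrow> bool" where
  "smooth_on U f \<longleftrightarrow> (\<forall>k. Ck_on k U f)"

definition bounded_smooth_domain :: "'a::euclidean_space set \<Rightarrow> bool" where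
  "bounded_smooth_domain \<Omega> \<longleftrightarrow> bounded \<Omega> \<and> open \<Omega> \<and> connected \<Omega> \<and> \<Omega> \<noteq> {} \<and>
     (\<forall>z\<in>frontier \<Omega>. \<exists>U \<rho>. open U \<and> z \<in> U \<and> smooth_on U \<rho> \<and>
         frechet_derivative \<rho> (at z) \<noteq> (\<lambda>h. 0) \<and> \<Omega> \<inter> U = {x\<in>U. \<rho> x < 0})"

definition gagliardo :: "real \<Rightarrow> real \<Rightarrow> ('a::euclidean_space \<Rightarrow> real) \<Rightarrow> ennreal" where
  "gagliardo s p u = (\<integral>\<^sup>+ z. ennreal (\<bar>u (fst z) - u (snd z)\<bar> powr p /
        norm (fst z - snd z) powr (real DIM('a) + s * p)) \<partial>(lborel \<Otimes>\<^sub>M lborel))"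

definition Wsp :: "real \<Rightarrow> real \<Rightarrow> ('a::euclidean_space \<Rightarrow> real) set" where
  "Wsp s p = {u. u \<in> borel_measurable lborel \<and> (\<integral>\<^sup>+ x. ennreal (\<bar>u x\<bar> powr p) \<partial>lborel) < \<infinity>
                 \<and> gagliardo s p u < \<infinity>}"

definition Xsp :: "'a::euclidean_space set \<Rightarrow> real \<Rightarrow> real \<Rightarrow> ('a \<Rightarrow> real) set" where
  "Xsp \<Omega> s p = {u \<in> Wsp s p. AE x in lborel. x \<notin> \<Omega> \<longrightarrow> u x = 0}"

definition Xnorm_p :: "real \<Rightarrow> real \<Rightarrow> ('a::euclidean_space \<Rightarrow> real) \<Rightarrow> real" where
  "Xnorm_p s p u = enn2real (gagliardo s p u)"

definition Lint :: "'a::euclidean_space set \<Rightarrow> real \<Rightarrow> ('a \<Rightarrow> real) \<Rightarrow> real" where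
  "Lint \<Omega> r u = (\<integral>x\<in>\<Omega>. \<bar>u x\<bar> powr r \<partial>lborel)"

definition lambda1 :: "'a::euclidean_space set \<Rightarrow> real \<Rightarrow> real \<Rightarrow> real" where
  "lambda1 \<Omega> s p = Inf {Xnorm_p s p u | u. u \<in> Xsp \<Omega> s p \<and> Lint \<Omega> p u = 1}"

definition eigenfunction :: "'a::euclidean_space set \<Rightarrow> real \<Rightarrow> real \<Rightarrow> real \<Rightarrow> ('a \<Rightarrow> real) \<Rightarrow> bool" where
  "eigenfunction \<Omega> s p \<mu> u \<longleftrightarrow> u \<in> Xsp \<Omega> s p \<and> (\<exists>x. u x \<noteq> 0) \<and>
     (\<forall>v\<in>Xsp \<Omega> s p.
        (\<integral>z. \<bar>u (fst z) - u (snd z)\<bar> powr (p - 2) * (u (fst z) - u (snd z)) * (v (fst z) - v (snd z))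
              / norm (fst z - snd z) powr (real DIM('a) + s * p) \<partial>(lborel \<Otimes>\<^sub>M lborel))
        = \<mu> * (\<integral>x\<in>\<Omega>. \<bar>u x\<bar> powr (p - 2) * u x * v x \<partial>lborel))"

definition negpart :: "real \<Rightarrow> real" where
  "negpart r = min r 0"

definition I_minus :: "'a::euclidean_space set \<Rightarrow> real \<Rightarrow> real \<Rightarrow> real \<Rightarrow> real \<Rightarrow> real
                        \<Rightarrow> ('a \<Rightarrow> real) \<Rightarrow> real" where
  "I_minus \<Omega> s p q a lam u = Xnorm_p s p u / p + lam / q * Lint \<Omega> q (\<lambda>x. negpart (u x))
                            - a / p * Lint \<Omega> p (\<lambda>x. negpart (u x))"

end

theory Submission
  imports Defs
begin

lemma powr_sq_aux: "\<bar>d::real\<bar> powr (p - 2) * d * d = \<bar>d\<bar> powr p"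
proof (cases "d = 0")
  case False
  have "d * d = \<bar>d\<bar> powr 2" using False by (simp add: powr_numeral power2_eq_square)
  hence "\<bar>d\<bar> powr (p - 2) * d * d = \<bar>d\<bar> powr (p - 2) * \<bar>d\<bar> powr 2" by (simp add: mult.assoc)
  also have "\<dots> = \<bar>d\<bar> powr p" by (metis powr_add diff_add_cancel)
  finally show ?thesis .
qed simp

lemma gag_meas:
  fixes u :: "'a::euclidean_space \<Rightarrow> real"
  assumes "u \<in> borel_measurable lborel"
  shows "(\<lambda>z. \<bar>u (fst z) - u (snd z)\<bar> powr p /
        norm (fst z - snd z) powr (real DIM('a) + s * p)) \<in> borel_measurable (lborel \<Otimes>\<^sub>M lborel)"
  using assms by measurable

lemma Xnorm_eq_integral:
  fixes u :: "'a::euclidean_space \<Rightarrow> real"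
  assumes "u \<in> borel_measurable lborel"
  shows "Xnorm_p s p u = (\<integral>z. \<bar>u (fst z) - u (snd z)\<bar> powr p /
        norm (fst z - snd z) powr (real DIM('a) + s * p) \<partial>(lborel \<Otimes>\<^sub>M lborel))"
  unfolding Xnorm_p_def gagliardo_def
  by (rule integral_eq_nn_integral[symmetric]) (use gag_meas[OF assms] in auto)

theorem lemma4p8:
  fixes \<Omega> :: "'a::euclidean_space set" and s p q a \<Lambda> :: real and \<phi>1 :: "'a \<Rightarrow> real"
  assumes "bounded_smooth_domain \<Omega>"
    and "0 < s" "s < 1" "1 < p" "real DIM('a) > s * p"
    and "eigenfunction \<Omega> s p (lambda1 \<Omega> s p) \<phi>1"
    and "\<forall>x\<in>\<Omega>. \<phi>1 x > 0"
    and "Lint \<Omega> p \<phi>1 = 1"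
    and "lambda1 \<Omega> s p < a"
    and "1 < q" "q < p"
    and "\<Lambda> > 0"
  shows "\<exists>t0 > 0. \<forall>t \<ge> t0. \<forall>lam. 0 < lam \<and> lam < \<Lambda> \<longrightarrow>
           I_minus \<Omega> s p q a lam (\<lambda>x. - t * \<phi>1 x) < 0"
proof -
  define N where "N = real DIM('a) + s * p"
  define f where "f = (\<lambda>z::'a\<times>'a. \<bar>\<phi>1 (fst z) - \<phi>1 (snd z)\<bar> powr p / norm (fst z - snd z) powr N)"
  have inX: "\<phi>1 \<in> Xsp \<Omega> s p" and eq: "\<And>v. v \<in> Xsp \<Omega> s p \<Longrightarrow>
        (\<integral>z. \<bar>\<phi>1 (fst z) - \<phi>1 (snd z)\<bar> powr (p - 2) * (\<phi>1 (fst z) - \<phi>1 (snd z)) * (v (fst z) - v (snd z))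
              / norm (fst z - snd z) powr (real DIM('a) + s * p) \<partial>(lborel \<Otimes>\<^sub>M lborel))
        = lambda1 \<Omega> s p * (\<integral>x\<in>\<Omega>. \<bar>\<phi>1 x\<bar> powr (p - 2) * \<phi>1 x * v x \<partial>lborel)"
    using assms(6) unfolding eigenfunction_def by blast+
  have meas: "\<phi>1 \<in> borel_measurable lborel" using inX unfolding Xsp_def Wsp_def by auto
  note e1 = eq[OF inX]
  have "Xnorm_p s p \<phi>1 = lambda1 \<Omega> s p"
  proof -
    have "Xnorm_p s p \<phi>1 = integral\<^sup>L (lborel \<Otimes>\<^sub>M lborel) f"
      unfolding f_def N_def by (rule Xnorm_eq_integral[OF meas])
    also have "\<dots> = lambda1 \<Omega> s p * (\<integral>x\<in>\<Omega>. \<bar>\<phi>1 x\<bar> powr (p - 2) * \<phi>1 x * \<phi>1 x \<partial>lborel)"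
      using e1 unfolding f_def N_def by (simp add: powr_sq_aux)
    also have "(\<integral>x\<in>\<Omega>. \<bar>\<phi>1 x\<bar> powr (p - 2) * \<phi>1 x * \<phi>1 x \<partial>lborel) = Lint \<Omega> p \<phi>1"
      unfolding Lint_def by (simp add: powr_sq_aux)
    finally show ?thesis using assms(8) by simp
  qed
  define X where "X = Xnorm_p s p \<phi>1"
  have X: "X < a" using \<open>Xnorm_p s p \<phi>1 = _\<close> assms(9) X_def by simp
  define C where "C = Lint \<Omega> q \<phi>1"
  have I: "I_minus \<Omega> s p q a lam (\<lambda>x. - t * \<phi>1 x) = t powr p * (X - a) / p + lam / q * (t powr q * C)"
    if "t > 0" for t lam
  proof -
    have "Xnorm_p s p (\<lambda>x. - t * \<phi>1 x) = integral\<^sup>L (lborel \<Otimes>\<^sub>M lborel) (\<lambda>z. t powr p * f z)"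
      unfolding f_def N_def
      apply (subst Xnorm_eq_integral) using meas apply measurable
      apply (rule Bochner_Integration.integral_cong[OF refl])
      using that by (simp add: right_diff_distrib[symmetric] abs_mult powr_mult abs_minus_commute)
    also have "\<dots> = t powr p * X"
      unfolding X_def f_def N_def by (simp add: Xnorm_eq_integral[OF meas] times_divide_eq_right[symmetric] del: times_divide_eq_right)
    finally have A: "Xnorm_p s p (\<lambda>x. - t * \<phi>1 x) = t powr p * X" .
    have B: "Lint \<Omega> r (\<lambda>x. negpart (- t * \<phi>1 x)) = t powr r * Lint \<Omega> r \<phi>1" for r
    proof -
      have "Lint \<Omega> r (\<lambda>x. negpart (- t * \<phi>1 x)) = (\<integral>x\<in>\<Omega>. t powr r * \<bar>\<phi>1 x\<bar> powr r \<partial>lborel)"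
        unfolding Lint_def set_lebesgue_integral_def
        apply (rule Bochner_Integration.integral_cong[OF refl])
        using that assms(7) by (auto simp: indicator_def negpart_def abs_mult powr_mult)
      also have "\<dots> = t powr r * Lint \<Omega> r \<phi>1"
        unfolding Lint_def by (simp add: set_integral_mult_right)
      finally show ?thesis .
    qed
    show ?thesis unfolding I_minus_def A B C_def using assms(8) by (simp add: diff_divide_distrib right_diff_distrib)
  qed
  define K where "K = \<Lambda> * \<bar>C\<bar> * p / (q * (a - X))"
  define t0 where "t0 = max 1 ((K + 1) powr (1 / (p - q)))"
  have t0: "t0 > 0" unfolding t0_def by simp
  have Kpos: "K \<ge> 0" unfolding K_def using X assms by simp
  show ?thesis
  proof (intro exI[of _ t0] conjI t0 allI impI)
    fix t lam assume t: "t0 \<le> t" and lam: "0 < lam \<and> lam < \<Lambda>"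
    have tp: "t > 0" using t t0 by simp
    have "(K + 1) powr (1 / (p - q)) \<le> t" using t unfolding t0_def by simp
    hence "((K + 1) powr (1 / (p - q))) powr (p - q) \<le> t powr (p - q)"
      by (intro powr_mono2) (use assms Kpos in auto)
    hence Kt: "K + 1 \<le> t powr (p - q)" using assms Kpos by (simp add: powr_powr)
    have tpq: "t powr p = t powr q * t powr (p - q)" by (simp add: powr_add[symmetric])
    have tq: "t powr q > 0" using tp by simp
    have "lam / q * (t powr q * C) \<le> \<Lambda> / q * (t powr q * \<bar>C\<bar>)"
    proof -
      have "lam * C \<le> lam * \<bar>C\<bar>" using lam by (simp add: mult_left_mono)
      also have "\<dots> \<le> \<Lambda> * \<bar>C\<bar>" using lam by (simp add: mult_right_mono)
      finally have "lam * C \<le> \<Lambda> * \<bar>C\<bar>" .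
      hence "t powr q * (lam * C) \<le> t powr q * (\<Lambda> * \<bar>C\<bar>)" using tq by simp
      hence "t powr q * (lam * C) / q \<le> t powr q * (\<Lambda> * \<bar>C\<bar>) / q"
        using assms(10) by (intro divide_right_mono) auto
      thus ?thesis by (simp add: ac_simps)
    qed
    also have "\<Lambda> / q * (t powr q * \<bar>C\<bar>) = t powr q * K * (a - X) / p"
      unfolding K_def using X assms by (simp add: field_simps)
    also have "\<dots> < t powr q * t powr (p - q) * (a - X) / p"
    proof -
      have "K < t powr (p - q)" using Kt by simp
      hence "t powr q * K * (a - X) < t powr q * t powr (p - q) * (a - X)"
        using tq X by simp
      thus ?thesis using assms by (simp add: divide_strict_right_mono)
    qed
    finally have "lam / q * (t powr q * C) < t powr p * (a - X) / p" using tpq by simp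
    moreover have "t powr p * (X - a) / p = - (t powr p * (a - X) / p)"
      by (metis minus_diff_eq minus_divide_left mult_minus_right)
    ultimately show "I_minus \<Omega> s p q a lam (\<lambda>x. - t * \<phi>1 x) < 0" using I[OF tp, of lam]
      by linarith
  qed
qed

end
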